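(* Let $G$ be a countable discrete group acting amenably by homeomorphisms on the Cantor space $D^{\aleph_0}=\{0,1\}^{\mathbb N}$. Then there exists a sequence of continuous maps $b^n\colon D^{\aleph_0}\to\mathbb P(G)$, each with finite image, such that for every $g\in G$, $\lim_{n\to\infty}\sup_{x\in D^{\aleph_0}}\|g b^n_x-b^n_{gx}\|_1=0$.
   Context: $\mathbb P(G)=\{b\colon G\to[0,1] : \sum_{g}b(g)=1\}\subset\ell^1(G)$ with the weak* topology and action $(gb)(h)=b(g^{-1}h)$. An action of $G$ on a compact space $X$ is amenable if there is a sequence of continuous maps $b^n\colon X\to\mathbb P(G)$ such that for every $g\in G$, $\lim_{n}\sup_{x\in X}\|g b^n_x-b^n_{gx}\|_1=0$. *)

theory Defs
  imports "HOL-Analysis.Analysis" "HOL-Algebra.Group_Action"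
begin

text \<open>Cantor space: nat => bool with the product topology of discrete bool.\<close>
type_synonym cantor = "nat \<Rightarrow> bool"

definition prob_vec :: "('g, 'b) monoid_scheme \<Rightarrow> ('g \<Rightarrow> real) \<Rightarrow> bool" where
  "prob_vec G b \<longleftrightarrow> (\<forall>g\<in>carrier G. 0 \<le> b g \<and> b g \<le> 1) \<and> (\<forall>g. g \<notin> carrier G \<longrightarrow> b g = 0)
     \<and> (b has_sum 1) (carrier G)"

text \<open>c_0(G): functions vanishing at infinity (the predual of l^1(G)).\<close>
definition c0_fun :: "('g, 'b) monoid_scheme \<Rightarrow> ('g \<Rightarrow> real) \<Rightarrow> bool" where
  "c0_fun G \<phi> \<longleftrightarrow> (\<forall>e>0. finite {g\<in>carrier G. \<bar>\<phi> g\<bar> \<ge> e})"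

text \<open>Continuity of x |-> b x into P(G) with the weak* topology sigma(l^1,c_0),
  i.e. the initial topology of the pairings with elements of c_0(G).\<close>
definition weakstar_cont_map :: "('g, 'b) monoid_scheme \<Rightarrow> ('a::topological_space \<Rightarrow> 'g \<Rightarrow> real) \<Rightarrow> bool" where
  "weakstar_cont_map G b \<longleftrightarrow> (\<forall>x. prob_vec G (b x)) \<and>
     (\<forall>\<phi>. c0_fun G \<phi> \<longrightarrow> continuous_on UNIV (\<lambda>x. \<Sum>\<^sub>\<infinity>h\<in>carrier G. b x h * \<phi> h))"

definition transl_l1_dist :: "('g, 'b) monoid_scheme \<Rightarrow> 'g \<Rightarrow> ('g \<Rightarrow> real) \<Rightarrow> ('g \<Rightarrow> real) \<Rightarrow> real" where
  "transl_l1_dist G g b c = (\<Sum>\<^sub>\<infinity>h\<in>carrier G. \<bar>b (inv\<^bsub>G\<^esub> g \<otimes>\<^bsub>G\<^esub> h) - c h\<bar>)"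

definition homeo_action :: "('g, 'b) monoid_scheme \<Rightarrow> ('g \<Rightarrow> 'a::topological_space \<Rightarrow> 'a) \<Rightarrow> bool" where
  "homeo_action G \<phi> \<longleftrightarrow> group_action G UNIV \<phi> \<and> (\<forall>g\<in>carrier G. continuous_on UNIV (\<phi> g))"

definition amenable_action :: "('g, 'b) monoid_scheme \<Rightarrow> ('g \<Rightarrow> 'a::topological_space \<Rightarrow> 'a) \<Rightarrow> bool" where
  "amenable_action G \<phi> \<longleftrightarrow> (\<exists>b :: nat \<Rightarrow> 'a \<Rightarrow> 'g \<Rightarrow> real.
     (\<forall>n. weakstar_cont_map G (b n)) \<and>
     (\<forall>g\<in>carrier G. (\<lambda>n. SUP x. transl_l1_dist G g (b n x) (b n (\<phi> g x))) \<longlonglongrightarrow> 0))"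

end

theory Submission
  imports Defs
begin

definition l1 :: "('g, 'b) monoid_scheme \<Rightarrow> ('g \<Rightarrow> real) \<Rightarrow> ('g \<Rightarrow> real) \<Rightarrow> real" where
  "l1 G u v = (\<Sum>\<^sub>\<infinity>h\<in>carrier G. \<bar>u h - v h\<bar>)"

lemma diff_summable:
  fixes u v :: "'a \<Rightarrow> real"
  assumes "u summable_on A" "v summable_on A"
  shows "(\<lambda>h. u h - v h) summable_on A"
proof -
  have "(\<lambda>h. u h + (- v h)) summable_on A"
    using assms summable_on_add summable_on_uminus by blast
  then show ?thesis by simp
qed

lemma absdiff_summable:
  fixes u v :: "'a \<Rightarrow> real"
  assumes "u summable_on A" "v summable_on A"
  shows "(\<lambda>h. \<bar>u h - v h\<bar>) summable_on A"
  using diff_summable[OF assms] summable_on_iff_abs_summable_on_real[of "\<lambda>h. u h - v h" A] by simp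

lemma absdiff_tri:
  fixes f g k :: "'a \<Rightarrow> real"
  assumes "f summable_on A" "g summable_on A" "k summable_on A"
  shows "(\<Sum>\<^sub>\<infinity>h\<in>A. \<bar>f h - k h\<bar>) \<le> (\<Sum>\<^sub>\<infinity>h\<in>A. \<bar>f h - g h\<bar>) + (\<Sum>\<^sub>\<infinity>h\<in>A. \<bar>g h - k h\<bar>)"
proof -
  have "(\<Sum>\<^sub>\<infinity>h\<in>A. \<bar>f h - k h\<bar>) \<le> (\<Sum>\<^sub>\<infinity>h\<in>A. \<bar>f h - g h\<bar> + \<bar>g h - k h\<bar>)"
    by (intro infsum_mono absdiff_summable summable_on_add assms) auto
  also have "\<dots> = (\<Sum>\<^sub>\<infinity>h\<in>A. \<bar>f h - g h\<bar>) + (\<Sum>\<^sub>\<infinity>h\<in>A. \<bar>g h - k h\<bar>)"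
    by (intro infsum_add absdiff_summable assms)
  finally show ?thesis .
qed

lemma absdiff_le_add:
  fixes f k :: "'a \<Rightarrow> real"
  assumes "f summable_on A" "k summable_on A" "\<And>h. h \<in> A \<Longrightarrow> f h \<ge> 0" "\<And>h. h \<in> A \<Longrightarrow> k h \<ge> 0"
  shows "(\<Sum>\<^sub>\<infinity>h\<in>A. \<bar>f h - k h\<bar>) \<le> (\<Sum>\<^sub>\<infinity>h\<in>A. f h) + (\<Sum>\<^sub>\<infinity>h\<in>A. k h)"
proof -
  have "(\<Sum>\<^sub>\<infinity>h\<in>A. \<bar>f h - k h\<bar>) \<le> (\<Sum>\<^sub>\<infinity>h\<in>A. f h + k h)"
  proof (rule infsum_mono)
    show "(\<lambda>h. \<bar>f h - k h\<bar>) summable_on A" by (intro absdiff_summable assms)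
    show "(\<lambda>h. f h + k h) summable_on A" by (intro summable_on_add assms)
    fix x assume "x \<in> A" then show "\<bar>f x - k x\<bar> \<le> f x + k x" using assms(3,4)[of x] by (simp add: abs_if)
  qed
  also have "\<dots> = (\<Sum>\<^sub>\<infinity>h\<in>A. f h) + (\<Sum>\<^sub>\<infinity>h\<in>A. k h)"
    by (intro infsum_add assms)
  finally show ?thesis .
qed

lemma prob_vec_facts:
  assumes "prob_vec G u"
  shows "u summable_on carrier G" "infsum u (carrier G) = 1" "\<And>h. h \<in> carrier G \<Longrightarrow> u h \<ge> 0"
  using assms unfolding prob_vec_def by (auto simp: has_sum_iff)

lemma l1_sym: "l1 G u v = l1 G v u"
  unfolding l1_def by (simp add: abs_minus_commute)

lemma l1_tri:
  assumes "prob_vec G u" "prob_vec G v" "prob_vec G w"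
  shows "l1 G u w \<le> l1 G u v + l1 G v w"
  unfolding l1_def using prob_vec_facts(1) assms by (intro absdiff_tri) auto

lemma l1_tail:
  assumes "prob_vec G u" "prob_vec G v" "finite F" "F \<subseteq> carrier G"
  shows "l1 G u v \<le> (\<Sum>h\<in>F. \<bar>u h - v h\<bar>) + (1 - sum u F) + (1 - sum v F)"
proof -
  note su = prob_vec_facts[OF assms(1)] and sv = prob_vec_facts[OF assms(2)]
  define C where "C = carrier G - F"
  have CU: "carrier G = F \<union> C" "F \<inter> C = {}" using assms(4) unfolding C_def by auto
  have suC: "u summable_on C" "v summable_on C" unfolding C_def
    using su(1) sv(1) summable_on_subset by blast+
  have "infsum u (carrier G) = sum u F + infsum u C"
    using CU suC assms(3) by (subst CU(1), subst infsum_Un_disjoint) auto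
  hence uC: "infsum u C = 1 - sum u F" using su(2) by simp
  have "infsum v (carrier G) = sum v F + infsum v C"
    using CU suC assms(3) by (subst CU(1), subst infsum_Un_disjoint) auto
  hence vC: "infsum v C = 1 - sum v F" using sv(2) by simp
  have "l1 G u v = (\<Sum>h\<in>F. \<bar>u h - v h\<bar>) + (\<Sum>\<^sub>\<infinity>h\<in>C. \<bar>u h - v h\<bar>)"
    unfolding l1_def using CU suC assms(3)
    by (subst CU(1), subst infsum_Un_disjoint) (auto intro: absdiff_summable)
  also have "(\<Sum>\<^sub>\<infinity>h\<in>C. \<bar>u h - v h\<bar>) \<le> infsum u C + infsum v C"
    using suC su(3) sv(3) unfolding C_def by (intro absdiff_le_add) auto
  finally show ?thesis using uC vC by simp
qed


lemma cylinder_nbhd: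
  fixes U :: "(nat \<Rightarrow> 'c::topological_space) set"
  assumes "open U" "x \<in> U"
  shows "\<exists>k. \<forall>y. (\<forall>i<k. y i = x i) \<longrightarrow> y \<in> U"
proof -
  have "openin (product_topology (\<lambda>i. euclidean) UNIV) U"
    using assms unfolding open_fun_def by auto
  from product_topology_open_contains_basis[OF this assms(2)]
  obtain X where H: "x \<in> (\<Pi>\<^sub>E i\<in>UNIV. X i)" "finite {i. X i \<noteq> UNIV}" "(\<Pi>\<^sub>E i\<in>UNIV. X i) \<subseteq> U"
    by auto
  define k where "k = Suc (\<Sum>{i. X i \<noteq> UNIV})"
  have kb: "i < k" if "X i \<noteq> UNIV" for i
  proof -
    have "i \<le> \<Sum>{i. X i \<noteq> UNIV}" using H(2) that by (intro member_le_sum) auto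
    thus ?thesis unfolding k_def by simp
  qed
  have "y \<in> U" if "\<forall>i<k. y i = x i" for y
  proof -
    have "y \<in> (\<Pi>\<^sub>E i\<in>UNIV. X i)"
    proof (simp add: PiE_def Pi_def, intro allI)
      fix i show "y i \<in> X i"
      proof (cases "X i = UNIV")
        case False thus ?thesis using kb[OF False] that H(1) by auto
      qed simp
    qed
    thus ?thesis using H(3) by auto
  qed
  thus ?thesis by blast
qed

lemma cont_cyl:
  fixes f :: "(nat \<Rightarrow> 'c::topological_space) \<Rightarrow> real"
  assumes "continuous_on UNIV f" "e > 0"
  shows "\<exists>k. \<forall>y. (\<forall>i<k. y i = x i) \<longrightarrow> \<bar>f y - f x\<bar> < e"
proof -
  have "open (UNIV \<inter> f -` {f x - e <..< f x + e})"
    using continuous_on_open_vimage[of UNIV f] assms(1) by auto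
  moreover have "x \<in> UNIV \<inter> f -` {f x - e <..< f x + e}" using assms by auto
  ultimately obtain k where "\<forall>y. (\<forall>i<k. y i = x i) \<longrightarrow> y \<in> UNIV \<inter> f -` {f x - e <..< f x + e}"
    using cylinder_nbhd by blast
  thus ?thesis by (auto simp: abs_less_iff intro!: exI[of _ k])
qed

lemma cylinder_open: "open {y :: cantor. \<forall>i<k. y i = x i}"
proof -
  have "open {f :: cantor. \<forall>i\<in>{..<k}. f (id i) \<in> {x i}}"
    by (rule product_topology_basis') (auto simp: open_discrete)
  moreover have "{f :: cantor. \<forall>i\<in>{..<k}. f (id i) \<in> {x i}} = {y. \<forall>i<k. y i = x i}" by auto
  ultimately show ?thesis by simp
qed

lemma compact_cantor: "compact (UNIV :: cantor set)"
proof -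
  have "compact_space (product_topology (\<lambda>i::nat. (euclidean :: bool topology)) UNIV)"
    unfolding compact_space_product_topology
    by (simp add: compact_space_def finite_imp_compact)
  hence "compact_space (euclidean :: cantor topology)" by (simp only: euclidean_product_topology)
  thus ?thesis by (simp add: compact_space_def compactin_euclidean_iff)
qed

lemma coord_cont:
  assumes "weakstar_cont_map G b" "h \<in> carrier G"
  shows "continuous_on UNIV (\<lambda>x. b x h)"
proof -
  define \<phi> where "\<phi> = (\<lambda>h'. if h' = h then 1 else (0::real))"
  have "c0_fun G \<phi>" unfolding c0_fun_def
  proof (intro allI impI)
    fix e :: real assume "e > 0"
    have "{g\<in>carrier G. \<bar>\<phi> g\<bar> \<ge> e} \<subseteq> {h}" using \<open>e>0\<close> by (auto simp: \<phi>_def)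
    thus "finite {g\<in>carrier G. \<bar>\<phi> g\<bar> \<ge> e}" using finite_subset by blast
  qed
  hence c: "continuous_on UNIV (\<lambda>x. \<Sum>\<^sub>\<infinity>h'\<in>carrier G. b x h' * \<phi> h')"
    using assms(1) unfolding weakstar_cont_map_def by blast
  have "(\<Sum>\<^sub>\<infinity>h'\<in>carrier G. b x h' * \<phi> h') = b x h" for x
  proof -
    have "(\<Sum>\<^sub>\<infinity>h'\<in>carrier G. b x h' * \<phi> h') = (\<Sum>\<^sub>\<infinity>h'\<in>{h}. b x h' * \<phi> h')"
      using assms(2) by (intro infsum_cong_neutral) (auto simp: \<phi>_def)
    thus ?thesis by (simp add: \<phi>_def)
  qed
  thus ?thesis using c by simp
qed


lemma pointwise_approx:
  fixes b :: "cantor \<Rightarrow> 'g \<Rightarrow> real"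
  assumes wc: "weakstar_cont_map G b" and e: "e > 0"
  shows "\<exists>k. \<forall>y. (\<forall>i<k. y i = x i) \<longrightarrow> l1 G (b y) (b x) < e"
proof -
  have pv: "\<And>z. prob_vec G (b z)" using wc unfolding weakstar_cont_map_def by blast
  note px = prob_vec_facts[OF pv[of x]]
  obtain F where F: "finite F" "F \<subseteq> carrier G" "dist (sum (b x) F) (infsum (b x) (carrier G)) \<le> e/8"
    using infsum_finite_approximation[OF px(1), of "e/8"] e by auto
  have "\<bar>sum (b x) F - 1\<bar> \<le> e/8" using F(3) px(2) by (simp add: dist_real_def)
  hence "-(sum (b x) F - 1) \<le> e/8" by (rule abs_le_D2)
  hence F1: "sum (b x) F \<ge> 1 - e/8" by linarith
  define d where "d = e / (8 * (real (card F) + 1))"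
  have d: "d > 0" using e unfolding d_def by (simp add: add_pos_nonneg)
  have "\<forall>h\<in>F. \<exists>k. \<forall>y. (\<forall>i<k. y i = x i) \<longrightarrow> \<bar>b y h - b x h\<bar> < d"
  proof
    fix h assume "h \<in> F"
    hence "continuous_on UNIV (\<lambda>z. b z h)" using coord_cont[OF wc] F(2) by blast
    thus "\<exists>k. \<forall>y. (\<forall>i<k. y i = x i) \<longrightarrow> \<bar>b y h - b x h\<bar> < d" by (rule cont_cyl[where f="\<lambda>z. b z h", OF _ d])
  qed
  from bchoice[OF this] obtain kf where kf0: "\<forall>h\<in>F. \<forall>y. (\<forall>i<kf h. y i = x i) \<longrightarrow> \<bar>b y h - b x h\<bar> < d"
    by blast
  have kf: "\<And>h y. h \<in> F \<Longrightarrow> (\<forall>i<kf h. y i = x i) \<Longrightarrow> \<bar>b y h - b x h\<bar> < d"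
    using kf0 by blast
  define k where "k = (\<Sum>h\<in>F. kf h)"
  have "l1 G (b y) (b x) < e" if agree: "\<forall>i<k. y i = x i" for y
  proof -
    have hd: "\<bar>b y h - b x h\<bar> \<le> d" if "h \<in> F" for h
    proof -
      have "kf h \<le> k" unfolding k_def using F(1) that by (intro member_le_sum) auto
      have "\<forall>i<kf h. y i = x i"
      proof (intro allI impI)
        fix i assume "i < kf h"
        with \<open>kf h \<le> k\<close> have "i < k" by linarith
        thus "y i = x i" using agree by blast
      qed
      thus ?thesis by (rule less_imp_le[OF kf[OF that]])
    qed
    have S: "(\<Sum>h\<in>F. \<bar>b y h - b x h\<bar>) \<le> real (card F) * d"
      using sum_bounded_above[of F "\<lambda>h. \<bar>b y h - b x h\<bar>" d] hd by simp
    have cd: "real (card F) * d \<le> e/8"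
    proof -
      have "real (card F) * d = e/8 * (real (card F) / (real (card F) + 1))"
        unfolding d_def by (simp add: field_simps)
      also have "\<dots> \<le> e/8 * 1" using e by (intro mult_left_mono) auto
      finally show ?thesis by simp
    qed
    have "sum (b x) F - sum (b y) F = (\<Sum>h\<in>F. b x h - b y h)" by (simp add: sum_subtractf)
    also have "\<dots> \<le> (\<Sum>h\<in>F. \<bar>b y h - b x h\<bar>)" by (intro sum_mono) auto
    finally have "sum (b y) F \<ge> 1 - e/4" using S cd F1 by linarith
    have "l1 G (b y) (b x) \<le> (\<Sum>h\<in>F. \<bar>b y h - b x h\<bar>) + (1 - sum (b y) F) + (1 - sum (b x) F)"
      by (rule l1_tail[OF pv pv F(1,2)])
    thus ?thesis using S cd F1 \<open>sum (b y) F \<ge> 1 - e/4\<close> e by linarith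
  qed
  thus ?thesis by blast
qed

lemma uniform_approx:
  fixes b :: "cantor \<Rightarrow> 'g \<Rightarrow> real"
  assumes wc: "weakstar_cont_map G b" and e: "e > 0"
  shows "\<exists>K. \<forall>y z. (\<forall>i<K. y i = z i) \<longrightarrow> l1 G (b y) (b z) \<le> e"
proof -
  have pv: "\<And>z. prob_vec G (b z)" using wc unfolding weakstar_cont_map_def by blast
  have "\<forall>x. \<exists>k. \<forall>y. (\<forall>i<k. y i = x i) \<longrightarrow> l1 G (b y) (b x) < e/2"
    by (intro allI pointwise_approx[OF wc]) (use e in simp)
  from choice[OF this] obtain kx where kx0: "\<forall>x y. (\<forall>i<kx x. y i = x i) \<longrightarrow> l1 G (b y) (b x) < e/2"
    by blast
  have kx: "\<And>x y. (\<forall>i<kx x. y i = x i) \<Longrightarrow> l1 G (b y) (b x) < e/2" using kx0 by blast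
  define C where "C = (\<lambda>x. {y :: cantor. \<forall>i<kx x. y i = x i})"
  have o: "\<And>x. x \<in> UNIV \<Longrightarrow> open (C x)" unfolding C_def by (rule cylinder_open)
  have cov: "UNIV \<subseteq> (\<Union>x\<in>UNIV. C x)" unfolding C_def by auto
  obtain X0 where X0: "X0 \<subseteq> UNIV" "finite X0" "UNIV \<subseteq> (\<Union>x\<in>X0. C x)"
    by (rule compactE_image[OF compact_cantor o cov])
  define K where "K = (\<Sum>x\<in>X0. kx x)"
  have "l1 G (b y) (b z) \<le> e" if agree: "\<forall>i<K. y i = z i" for y z
  proof -
    obtain x where x: "x \<in> X0" "y \<in> C x" using X0(3) by blast
    have "kx x \<le> K" unfolding K_def using X0(2) x(1) by (intro member_le_sum) auto
    moreover have "\<forall>i<kx x. y i = x i" using x(2) unfolding C_def by simp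
    ultimately have "\<forall>i<kx x. z i = x i"
    proof (intro allI impI)
      fix i assume "kx x \<le> K" "\<forall>i<kx x. y i = x i" "i < kx x"
      hence "i < K" "y i = x i" by auto
      thus "z i = x i" using agree by auto
    qed
    hence "l1 G (b z) (b x) < e/2" by (rule kx)
    moreover have "l1 G (b y) (b x) < e/2" using x(2) unfolding C_def by (intro kx) simp
    moreover have "l1 G (b y) (b z) \<le> l1 G (b y) (b x) + l1 G (b x) (b z)" by (rule l1_tri[OF pv pv pv])
    ultimately show ?thesis using l1_sym[of G "b x" "b z"] by linarith
  qed
  thus ?thesis by blast
qed


lemma shift_bij:
  assumes "group G" "g \<in> carrier G"
  shows "bij_betw (\<lambda>h. inv\<^bsub>G\<^esub> g \<otimes>\<^bsub>G\<^esub> h) (carrier G) (carrier G)"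
proof -
  interpret G: group G by fact
  show ?thesis
  proof (rule bij_betw_byWitness[where f'="\<lambda>h. g \<otimes>\<^bsub>G\<^esub> h"])
    show "\<forall>a\<in>carrier G. g \<otimes>\<^bsub>G\<^esub> (inv\<^bsub>G\<^esub> g \<otimes>\<^bsub>G\<^esub> a) = a"
      using assms(2) by (simp add: G.m_assoc[symmetric])
    show "\<forall>a\<in>carrier G. inv\<^bsub>G\<^esub> g \<otimes>\<^bsub>G\<^esub> (g \<otimes>\<^bsub>G\<^esub> a) = a"
      using assms(2) by (simp add: G.m_assoc[symmetric])
    show "(\<lambda>h. inv\<^bsub>G\<^esub> g \<otimes>\<^bsub>G\<^esub> h) ` carrier G \<subseteq> carrier G" using assms(2) by auto
    show "(\<otimes>\<^bsub>G\<^esub>) g ` carrier G \<subseteq> carrier G" using assms(2) by auto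
  qed
qed

lemma transl_bounds:
  assumes grp: "group G" and g: "g \<in> carrier G"
    and pb: "prob_vec G b" and pb': "prob_vec G b'" and pc: "prob_vec G c" and pc': "prob_vec G c'"
  shows "transl_l1_dist G g b' c' \<le> transl_l1_dist G g b c + l1 G b' b + l1 G c c'"
    and "transl_l1_dist G g b c \<le> 2" and "0 \<le> transl_l1_dist G g b c"
proof -
  note bij = shift_bij[OF grp g]
  define s where "s u = (\<lambda>h. u (inv\<^bsub>G\<^esub> g \<otimes>\<^bsub>G\<^esub> h))" for u :: "'a \<Rightarrow> real"
  have ss: "s u summable_on carrier G" "infsum (s u) (carrier G) = 1" if "prob_vec G u" for u
    using summable_on_reindex_bij_betw[OF bij, of u] infsum_reindex_bij_betw[OF bij, of u]
      prob_vec_facts[OF that] unfolding s_def by auto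
  have sn: "s u h \<ge> 0" if "prob_vec G u" "h \<in> carrier G" for u h
  proof -
    have "inv\<^bsub>G\<^esub> g \<otimes>\<^bsub>G\<^esub> h \<in> carrier G" using bij that(2) bij_betw_apply by fastforce
    thus ?thesis unfolding s_def using prob_vec_facts(3)[OF that(1)] by blast
  qed
  have sl: "(\<Sum>\<^sub>\<infinity>h\<in>carrier G. \<bar>s u h - s v h\<bar>) = l1 G u v" for u v
    unfolding s_def l1_def using infsum_reindex_bij_betw[OF bij, of "\<lambda>h. \<bar>u h - v h\<bar>"] by simp
  have tr: "transl_l1_dist G g u v = (\<Sum>\<^sub>\<infinity>h\<in>carrier G. \<bar>s u h - v h\<bar>)" for u v
    unfolding transl_l1_dist_def s_def by simp
  have "transl_l1_dist G g b' c' \<le> (\<Sum>\<^sub>\<infinity>h\<in>carrier G. \<bar>s b' h - s b h\<bar>) + (\<Sum>\<^sub>\<infinity>h\<in>carrier G. \<bar>s b h - c' h\<bar>)"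
    unfolding tr by (intro absdiff_tri ss pb pb' prob_vec_facts(1)[OF pc'])
  also have "(\<Sum>\<^sub>\<infinity>h\<in>carrier G. \<bar>s b h - c' h\<bar>) \<le> (\<Sum>\<^sub>\<infinity>h\<in>carrier G. \<bar>s b h - c h\<bar>) + (\<Sum>\<^sub>\<infinity>h\<in>carrier G. \<bar>c h - c' h\<bar>)"
    by (intro absdiff_tri ss pb prob_vec_facts(1)[OF pc'] prob_vec_facts(1)[OF pc])
  finally show "transl_l1_dist G g b' c' \<le> transl_l1_dist G g b c + l1 G b' b + l1 G c c'"
    unfolding tr sl by (simp add: l1_def)
  have "transl_l1_dist G g b c \<le> infsum (s b) (carrier G) + infsum c (carrier G)"
    unfolding tr using sn[OF pb] prob_vec_facts(3)[OF pc]
    by (intro absdiff_le_add ss pb prob_vec_facts(1)[OF pc])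
  thus "transl_l1_dist G g b c \<le> 2" using ss(2)[OF pb] prob_vec_facts(2)[OF pc] by simp
  show "0 \<le> transl_l1_dist G g b c" unfolding transl_l1_dist_def by (intro infsum_nonneg) auto
qed

theorem lemma3p3p5:
  fixes G :: "('g, 'b) monoid_scheme" and \<phi> :: "'g \<Rightarrow> cantor \<Rightarrow> cantor"
  assumes "group G" and "countable (carrier G)"
    and "homeo_action G \<phi>" and "amenable_action G \<phi>"
  shows "\<exists>b :: nat \<Rightarrow> cantor \<Rightarrow> 'g \<Rightarrow> real.
     (\<forall>n. weakstar_cont_map G (b n) \<and> finite (range (b n))) \<and>
     (\<forall>g\<in>carrier G. (\<lambda>n. SUP x. transl_l1_dist G g (b n x) (b n (\<phi> g x))) \<longlonglongrightarrow> 0)"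
proof -
  obtain b :: "nat \<Rightarrow> cantor \<Rightarrow> 'g \<Rightarrow> real" where wc: "\<And>n. weakstar_cont_map G (b n)"
    and conv: "\<And>g. g \<in> carrier G \<Longrightarrow> (\<lambda>n. SUP x. transl_l1_dist G g (b n x) (b n (\<phi> g x))) \<longlonglongrightarrow> 0"
    using assms(4) unfolding amenable_action_def by blast
  have pv: "\<And>n x. prob_vec G (b n x)" using wc unfolding weakstar_cont_map_def by blast
  define \<epsilon> where "\<epsilon> n = inverse (real (Suc n))" for n
  have "\<forall>n. \<exists>K. \<forall>y z. (\<forall>i<K. y i = z i) \<longrightarrow> l1 G (b n y) (b n z) \<le> \<epsilon> n"
    by (intro allI uniform_approx wc) (simp add: \<epsilon>_def)
  from choice[OF this] obtain K where K0: "\<forall>n y z. (\<forall>i<K n. y i = z i) \<longrightarrow> l1 G (b n y) (b n z) \<le> \<epsilon> n"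
    by blast
  define tr where "tr k x = (\<lambda>i. if i < k then x i else False)" for k and x :: cantor
  define b' where "b' n x = b n (tr (K n) x)" for n x
  have agr: "\<forall>i<K n. tr (K n) x i = x i" for n x by (simp add: tr_def)
  have close1: "l1 G (b' n x) (b n x) \<le> \<epsilon> n" for n x
    unfolding b'_def using K0 agr by blast
  have close2: "l1 G (b n x) (b' n x) \<le> \<epsilon> n" for n x
    using close1 l1_sym by metis
  have pv': "\<And>n x. prob_vec G (b' n x)" unfolding b'_def using pv by blast
  have trc: "continuous_on UNIV (tr k)" for k
  proof (rule continuous_on_coordinatewise_then_product)
    fix i show "continuous_on UNIV (\<lambda>x. tr k x i)"
      by (cases "i < k") (simp_all add: tr_def)
  qed
  have wc': "weakstar_cont_map G (b' n)" for n
    unfolding weakstar_cont_map_def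
  proof (intro conjI allI impI)
    fix x show "prob_vec G (b' n x)" by (rule pv')
  next
    fix \<psi> assume "c0_fun G \<psi>"
    hence "continuous_on UNIV (\<lambda>y. \<Sum>\<^sub>\<infinity>h\<in>carrier G. b n y h * \<psi> h)"
      using wc unfolding weakstar_cont_map_def by blast
    thus "continuous_on UNIV (\<lambda>x. \<Sum>\<^sub>\<infinity>h\<in>carrier G. b' n x h * \<psi> h)"
      unfolding b'_def by (rule continuous_on_compose2[OF _ trc]) auto
  qed
  have fin: "finite (range (b' n))" for n
  proof -
    have "range (tr k) \<subseteq> (\<lambda>S i. i \<in> S) ` Pow {..<k}" for k
    proof
      fix y assume "y \<in> range (tr k)"
      then obtain x where "y = tr k x" by blast
      hence "y = (\<lambda>i. i \<in> {i. i < k \<and> x i})" unfolding tr_def by auto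
      thus "y \<in> (\<lambda>S i. i \<in> S) ` Pow {..<k}" by blast
    qed
    hence "finite (range (tr (K n)))" by (rule finite_subset) auto
    hence "finite (b n ` range (tr (K n)))" by blast
    moreover have "range (b' n) = b n ` range (tr (K n))" unfolding b'_def by auto
    ultimately show ?thesis by simp
  qed
  have lim: "(\<lambda>n. SUP x. transl_l1_dist G g (b' n x) (b' n (\<phi> g x))) \<longlonglongrightarrow> 0"
    if g: "g \<in> carrier G" for g
  proof -
    define M where "M n = (SUP x. transl_l1_dist G g (b n x) (b n (\<phi> g x)))" for n
    define N where "N n = (SUP x. transl_l1_dist G g (b' n x) (b' n (\<phi> g x)))" for n
    have bdM: "bdd_above (range (\<lambda>x. transl_l1_dist G g (b n x) (b n (\<phi> g x))))" for n
      using transl_bounds(2)[OF assms(1) g pv pv pv pv] by (intro bdd_aboveI2) 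
    have bdN: "bdd_above (range (\<lambda>x. transl_l1_dist G g (b' n x) (b' n (\<phi> g x))))" for n
      using transl_bounds(2)[OF assms(1) g pv' pv' pv' pv'] by (intro bdd_aboveI2)
    have up: "N n \<le> M n + 2 * \<epsilon> n" for n
      unfolding N_def
    proof (rule cSUP_least)
      fix x
      have "transl_l1_dist G g (b' n x) (b' n (\<phi> g x)) \<le> transl_l1_dist G g (b n x) (b n (\<phi> g x))
          + l1 G (b' n x) (b n x) + l1 G (b n (\<phi> g x)) (b' n (\<phi> g x))"
        by (rule transl_bounds(1)[OF assms(1) g pv pv' pv pv'])
      moreover have "transl_l1_dist G g (b n x) (b n (\<phi> g x)) \<le> M n"
        unfolding M_def by (rule cSUP_upper[OF _ bdM]) simp
      ultimately show "transl_l1_dist G g (b' n x) (b' n (\<phi> g x)) \<le> M n + 2 * \<epsilon> n"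
        using close1[of n x] close2[of n "\<phi> g x"] by linarith
    qed simp
    have lo: "0 \<le> N n" for n
    proof -
      have "0 \<le> transl_l1_dist G g (b' n undefined) (b' n (\<phi> g undefined))"
        by (rule transl_bounds(3)[OF assms(1) g pv' pv' pv' pv'])
      also have "\<dots> \<le> N n" unfolding N_def by (rule cSUP_upper[OF _ bdN]) simp
      finally show ?thesis .
    qed
    have "(\<lambda>n. M n + 2 * \<epsilon> n) \<longlonglongrightarrow> 0 + 2 * 0"
      unfolding M_def \<epsilon>_def
      by (intro tendsto_add tendsto_mult tendsto_const conv g LIMSEQ_inverse_real_of_nat)
    hence "(\<lambda>n. M n + 2 * \<epsilon> n) \<longlonglongrightarrow> 0" by simp
    moreover have "eventually (\<lambda>n. (\<lambda>_. 0::real) n \<le> N n) sequentially"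
      using lo by simp
    moreover have "eventually (\<lambda>n. N n \<le> M n + 2 * \<epsilon> n) sequentially"
      using up by simp
    ultimately have "N \<longlonglongrightarrow> 0"
      using real_tendsto_sandwich[of "\<lambda>_. 0" N sequentially "\<lambda>n. M n + 2 * \<epsilon> n" 0] by simp
    thus ?thesis unfolding N_def .
  qed
  show ?thesis
    by (rule exI[of _ b']) (use wc' fin lim in blast)
qed

end
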